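(* Let $\mathcal{P}=(|K|,V)$ be a polyhedral model and $x_1,x_2\in|K|$. The following are equivalent: (a) $x_1\approx_\triangle x_2$ in $\mathcal{P}$; (b) $x_1\equiv_\eta x_2$ in $\mathcal{P}$; (c) $\mathbb{F}(x_1)\equiv_\eta\mathbb{F}(x_2)$ in $\mathbb{F}(\mathcal{P})$; (d) $\mathbb{F}(x_1)\approx_\pm\mathbb{F}(x_2)$ in $\mathbb{F}(\mathcal{P})$.
   Context: Fix a set PL of proposition letters. A simplex $\sigma\subseteq\mathbb{R}^m$ is the convex hull of $d+1$ affinely independent points; its faces are the simplices spanned by nonempty subsets of its vertices; its relative interior (cell) is $\tilde\sigma=\{\sum_i\lambda_iv_i:\lambda_i\in(0,1],\sum_i\lambda_i=1\}$. A simplicial complex $K$ is a finite set of simplices in $\mathbb{R}^m$ closed under faces, any two of which intersect in a common face or in $\emptyset$. Its set of cells $\tilde K$ is partially ordered by $\tilde\sigma_1\preceq\tilde\sigma_2$ iff $\tilde\sigma_1$ is contained in the topological closure of $\tilde\sigma_2$. The polyhedron $|K|$ is the union of its simplices with the subspace topology; the cells partition $|K|$. A polyhedral model is $\mathcal{P}=(|K|,V)$ with $V:\mathrm{PL}\to\mathcal{P}(|K|)$, each $V(p)$ a union of cells. Its cell poset model is $\mathbb{F}(\mathcal{P})=(\tilde K,\preceq,\mathcal{V})$ with $\tilde\sigma\in\mathcal{V}(p)$ iff $\tilde\sigma\subseteq V(p)$; $\mathbb{F}(x)$ is the unique cell containing $x$. A topological path from $x$ is a continuous $\pi:[0,1]\to|K|$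 with $\pi(0)=x$. In a poset $(W,\preceq)$, a $\pm$-path of length $\ell\ge2$ from $w$ is $\pi:\{0,\dots,\ell\}\to W$ with $\pi(0)=w$, consecutive elements comparable, $\pi(0)\preceq\pi(1)$ and $\pi(\ell)\preceq\pi(\ell-1)$. SLCS$_\eta$ formulas: $\Phi::=p\mid\neg\Phi\mid\Phi_1\wedge\Phi_2\mid\eta(\Phi_1,\Phi_2)$. On $\mathcal{P}$: $x\models p$ iff $x\in V(p)$; $x\models\eta(\Phi_1,\Phi_2)$ iff some topological path $\pi$ from $x$ has $\pi(1)\models\Phi_2$ and $\pi(r)\models\Phi_1$ for all $r\in[0,1)$. On a poset model $(W,\preceq,\mathcal{V})$: $w\models p$ iff $w\in\mathcal{V}(p)$; $w\models\eta(\Phi_1,\Phi_2)$ iff some $\pm$-path $\pi$ of length $\ell$ from $w$ has $\pi(\ell)\models\Phi_2$ and $\pi(i)\models\Phi_1$ for all $0\le i<\ell$. Negation and conjunction standard. $\equiv_\eta$ is equality of satisfied SLCS$_\eta$ formulas in the given model. A weak simplicial bisimulation on $\mathcal{P}$ is a symmetric $B\subseteq|K|\times|K|$ such that whenever $B(x_1,x_2)$: (1) $x_1\in V(p)\iff x_2\in V(p)$ for all $p$; (2) for each topological path $\pi_1$ from $x_1$ there is a topological path $\pi_2$ from $x_2$ with $B(\pi_1(1),\pi_2(1))$ and for all $r_2\in[0,1)$ some $r_1\in[0,1)$ with $B(\pi_1(r_1),\pi_2(r_2))$; $\approx_\triangle$ is the union of all such relations. A weak $\pm$-bisimulation on a poset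 model $(W,\preceq,\mathcal{V})$ is a symmetric $B\subseteq W\times W$ such that whenever $B(w_1,w_2)$: (1) $w_1\in\mathcal{V}(p)\iff w_2\in\mathcal{V}(p)$ for all $p$; (2) for all $u_1,d_1$ with ($w_1\preceq u_1$ or $u_1\preceq w_1$) and $d_1\preceq u_1$ there is a $\pm$-path $\pi_2$ of length $\ell_2$ from $w_2$ with $B(d_1,\pi_2(\ell_2))$ and for all $0\le j<\ell_2$, $B(w_1,\pi_2(j))$ or $B(u_1,\pi_2(j))$; $\approx_\pm$ is the union of all such relations. *)

theory Defs
  imports "HOL-Analysis.Analysis"
begin

definition vertex_set :: "'a::euclidean_space set \<Rightarrow> bool" where
  "vertex_set C \<longleftrightarrow> finite C \<and> C \<noteq> {} \<and> \<not> affine_dependent C"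

definition is_simplex :: "'a::euclidean_space set \<Rightarrow> bool" where
  "is_simplex \<sigma> \<longleftrightarrow> (\<exists>C. vertex_set C \<and> \<sigma> = convex hull C)"

definition is_face :: "'a::euclidean_space set \<Rightarrow> 'a set \<Rightarrow> bool" where
  "is_face \<tau> \<sigma> \<longleftrightarrow> (\<exists>C D. vertex_set C \<and> \<sigma> = convex hull C \<and> D \<subseteq> C \<and> D \<noteq> {}
                          \<and> \<tau> = convex hull D)"

definition simplicial_complex :: "'a::euclidean_space set set \<Rightarrow> bool" where
  "simplicial_complex K \<longleftrightarrow> finite K \<and> (\<forall>\<sigma>\<in>K. is_simplex \<sigma>)
     \<and> (\<forall>\<sigma>\<in>K. \<forall>\<tau>. is_face \<tau> \<sigma> \<longrightarrow> \<tau> \<in> K)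
     \<and> (\<forall>\<sigma>1\<in>K. \<forall>\<sigma>2\<in>K. \<sigma>1 \<inter> \<sigma>2 = {} \<or> (is_face (\<sigma>1 \<inter> \<sigma>2) \<sigma>1 \<and> is_face (\<sigma>1 \<inter> \<sigma>2) \<sigma>2))"

text \<open>The relative interior (cell) of the simplex spanned by vertex set C.\<close>
definition cell_of :: "'a::euclidean_space set \<Rightarrow> 'a set" where
  "cell_of C = {(\<Sum>v\<in>C. l v *\<^sub>R v) | l. (\<forall>v\<in>C. 0 < l v \<and> l v \<le> 1) \<and> sum l C = 1}"

definition cells :: "'a::euclidean_space set set \<Rightarrow> 'a set set" where
  "cells K = {cell_of C | C. vertex_set C \<and> convex hull C \<in> K}"

definition cell_le :: "'a::euclidean_space set \<Rightarrow> 'a set \<Rightarrow> bool" where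
  "cell_le c1 c2 \<longleftrightarrow> c1 \<subseteq> closure c2"

definition carrier_poly :: "'a::euclidean_space set set \<Rightarrow> 'a set" where
  "carrier_poly K = \<Union>K"

definition polyhedral_model :: "'a::euclidean_space set set \<Rightarrow> ('p \<Rightarrow> 'a set) \<Rightarrow> bool" where
  "polyhedral_model K V \<longleftrightarrow> simplicial_complex K \<and> (\<forall>p. \<exists>S \<subseteq> cells K. V p = \<Union>S)"

definition cell_val :: "'a::euclidean_space set set \<Rightarrow> ('p \<Rightarrow> 'a set) \<Rightarrow> 'p \<Rightarrow> 'a set set" where
  "cell_val K V p = {c \<in> cells K. c \<subseteq> V p}"

definition cellF :: "'a::euclidean_space set set \<Rightarrow> 'a \<Rightarrow> 'a set" where
  "cellF K x = (THE c. c \<in> cells K \<and> x \<in> c)"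

datatype 'p form = Atom 'p | Neg "'p form" | Conj "'p form" "'p form" | Eta "'p form" "'p form"

definition topo_path :: "'a::euclidean_space set set \<Rightarrow> 'a \<Rightarrow> (real \<Rightarrow> 'a) \<Rightarrow> bool" where
  "topo_path K x \<pi> \<longleftrightarrow> continuous_on {0..1} \<pi> \<and> \<pi> ` {0..1} \<subseteq> carrier_poly K \<and> \<pi> 0 = x"

primrec sat_poly :: "'a::euclidean_space set set \<Rightarrow> ('p \<Rightarrow> 'a set) \<Rightarrow> 'a \<Rightarrow> 'p form \<Rightarrow> bool" where
  "sat_poly K V x (Atom p) \<longleftrightarrow> x \<in> V p"
| "sat_poly K V x (Neg \<phi>) \<longleftrightarrow> \<not> sat_poly K V x \<phi>"
| "sat_poly K V x (Conj \<phi> \<psi>) \<longleftrightarrow> sat_poly K V x \<phi> \<and> sat_poly K V x \<psi>"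
| "sat_poly K V x (Eta \<phi> \<psi>) \<longleftrightarrow>
     (\<exists>\<pi>. topo_path K x \<pi> \<and> sat_poly K V (\<pi> 1) \<psi> \<and> (\<forall>r\<in>{0..<1}. sat_poly K V (\<pi> r) \<phi>))"

definition pm_path :: "'w set \<Rightarrow> ('w \<Rightarrow> 'w \<Rightarrow> bool) \<Rightarrow> 'w \<Rightarrow> nat \<Rightarrow> (nat \<Rightarrow> 'w) \<Rightarrow> bool" where
  "pm_path W le w l \<pi> \<longleftrightarrow> l \<ge> 2 \<and> (\<forall>i\<le>l. \<pi> i \<in> W) \<and> \<pi> 0 = w
     \<and> (\<forall>i<l. le (\<pi> i) (\<pi> (Suc i)) \<or> le (\<pi> (Suc i)) (\<pi> i))
     \<and> le (\<pi> 0) (\<pi> 1) \<and> le (\<pi> l) (\<pi> (l - 1))"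

primrec sat_pos :: "'w set \<Rightarrow> ('w \<Rightarrow> 'w \<Rightarrow> bool) \<Rightarrow> ('p \<Rightarrow> 'w set) \<Rightarrow> 'w \<Rightarrow> 'p form \<Rightarrow> bool" where
  "sat_pos W le Val w (Atom p) \<longleftrightarrow> w \<in> Val p"
| "sat_pos W le Val w (Neg \<phi>) \<longleftrightarrow> \<not> sat_pos W le Val w \<phi>"
| "sat_pos W le Val w (Conj \<phi> \<psi>) \<longleftrightarrow> sat_pos W le Val w \<phi> \<and> sat_pos W le Val w \<psi>"
| "sat_pos W le Val w (Eta \<phi> \<psi>) \<longleftrightarrow>
     (\<exists>l \<pi>. pm_path W le w l \<pi> \<and> sat_pos W le Val (\<pi> l) \<psi> \<and> (\<forall>i<l. sat_pos W le Val (\<pi> i) \<phi>))"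

definition eq_eta_poly :: "'a::euclidean_space set set \<Rightarrow> ('p \<Rightarrow> 'a set) \<Rightarrow> 'a \<Rightarrow> 'a \<Rightarrow> bool" where
  "eq_eta_poly K V x1 x2 \<longleftrightarrow> (\<forall>\<phi>. sat_poly K V x1 \<phi> \<longleftrightarrow> sat_poly K V x2 \<phi>)"

definition eq_eta_pos :: "'w set \<Rightarrow> ('w \<Rightarrow> 'w \<Rightarrow> bool) \<Rightarrow> ('p \<Rightarrow> 'w set) \<Rightarrow> 'w \<Rightarrow> 'w \<Rightarrow> bool" where
  "eq_eta_pos W le Val w1 w2 \<longleftrightarrow> (\<forall>\<phi>::'p form. sat_pos W le Val w1 \<phi> \<longleftrightarrow> sat_pos W le Val w2 \<phi>)"

definition weak_simp_bisim :: "'a::euclidean_space set set \<Rightarrow> ('p \<Rightarrow> 'a set) \<Rightarrow> ('a \<times> 'a) set \<Rightarrow> bool" where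
  "weak_simp_bisim K V B \<longleftrightarrow> B \<subseteq> carrier_poly K \<times> carrier_poly K \<and> sym B \<and>
     (\<forall>x1 x2. (x1, x2) \<in> B \<longrightarrow>
        (\<forall>p. x1 \<in> V p \<longleftrightarrow> x2 \<in> V p) \<and>
        (\<forall>\<pi>1. topo_path K x1 \<pi>1 \<longrightarrow>
           (\<exists>\<pi>2. topo_path K x2 \<pi>2 \<and> (\<pi>1 1, \<pi>2 1) \<in> B \<and>
                 (\<forall>r2\<in>{0..<1}. \<exists>r1\<in>{0..<1}. (\<pi>1 r1, \<pi>2 r2) \<in> B))))"

definition approx_tri :: "'a::euclidean_space set set \<Rightarrow> ('p \<Rightarrow> 'a set) \<Rightarrow> 'a \<Rightarrow> 'a \<Rightarrow> bool" where
  "approx_tri K V x1 x2 \<longleftrightarrow> (\<exists>B. weak_simp_bisim K V B \<and> (x1, x2) \<in> B)"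

definition weak_pm_bisim :: "'w set \<Rightarrow> ('w \<Rightarrow> 'w \<Rightarrow> bool) \<Rightarrow> ('p \<Rightarrow> 'w set) \<Rightarrow> ('w \<times> 'w) set \<Rightarrow> bool" where
  "weak_pm_bisim W le Val B \<longleftrightarrow> B \<subseteq> W \<times> W \<and> sym B \<and>
     (\<forall>w1 w2. (w1, w2) \<in> B \<longrightarrow>
        (\<forall>p. w1 \<in> Val p \<longleftrightarrow> w2 \<in> Val p) \<and>
        (\<forall>u1\<in>W. \<forall>d1\<in>W. (le w1 u1 \<or> le u1 w1) \<and> le d1 u1 \<longrightarrow>
           (\<exists>l2 \<pi>2. pm_path W le w2 l2 \<pi>2 \<and> (d1, \<pi>2 l2) \<in> B \<and>
                    (\<forall>j<l2. (w1, \<pi>2 j) \<in> B \<or> (u1, \<pi>2 j) \<in> B))))"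

definition approx_pm :: "'w set \<Rightarrow> ('w \<Rightarrow> 'w \<Rightarrow> bool) \<Rightarrow> ('p \<Rightarrow> 'w set) \<Rightarrow> 'w \<Rightarrow> 'w \<Rightarrow> bool" where
  "approx_pm W le Val w1 w2 \<longleftrightarrow> (\<exists>B. weak_pm_bisim W le Val B \<and> (w1, w2) \<in> B)"

end

theory Submission
  imports Defs
begin


definition "cmp c1 c2 \<longleftrightarrow> cell_le c1 c2 \<or> cell_le c2 c1"

lemma cell_of_eq:
  assumes "vertex_set C" shows "cell_of C = rel_interior (convex hull C)"
proof -
  have ind: "\<not> affine_dependent C" and fin: "finite C" using assms by (auto simp: vertex_set_def)
  have le1: "\<forall>v\<in>C. u v \<le> 1" if "\<forall>x\<in>C. 0 < u x" "sum u C = 1" for u :: "'a \<Rightarrow> real"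
  proof
    fix v assume "v \<in> C"
    have "u v \<le> sum u C" using fin \<open>v\<in>C\<close> that by (intro member_le_sum) (auto simp: less_imp_le)
    then show "u v \<le> 1" using that by simp
  qed
  show ?thesis
    unfolding rel_interior_convex_hull_explicit[OF ind] cell_of_def
    using le1 by fastforce
qed

context fixes K :: "'a::euclidean_space set set" assumes SC: "simplicial_complex K"
begin

lemma K_simplex: "\<sigma> \<in> K \<Longrightarrow> \<exists>C. vertex_set C \<and> \<sigma> = convex hull C"
  using SC by (auto simp: simplicial_complex_def is_simplex_def)

lemma K_props: assumes "\<sigma> \<in> K" shows "compact \<sigma>" "convex \<sigma>" "\<sigma> \<noteq> {}" "closed \<sigma>"
proof -
  obtain C where "vertex_set C" "\<sigma> = convex hull C" using K_simplex assms by blast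
  then show "compact \<sigma>" "convex \<sigma>" "\<sigma> \<noteq> {}" "closed \<sigma>"
    by (auto simp: vertex_set_def compact_convex_hull finite_imp_compact compact_imp_closed)
qed

lemma K_finite: "finite K" using SC by (simp add: simplicial_complex_def)

lemma is_face_face_of: "is_face \<tau> \<sigma> \<Longrightarrow> \<tau> face_of \<sigma>"
  unfolding is_face_def vertex_set_def
  using face_of_convex_hull_affine_independent by blast

lemma cells_iff: "c \<in> cells K \<longleftrightarrow> (\<exists>\<sigma>\<in>K. c = rel_interior \<sigma>)"
proof
  assume "c \<in> cells K"
  then show "\<exists>\<sigma>\<in>K. c = rel_interior \<sigma>" unfolding cells_def using cell_of_eq by auto
next
  assume "\<exists>\<sigma>\<in>K. c = rel_interior \<sigma>"
  then obtain \<sigma> where "\<sigma> \<in> K" "c = rel_interior \<sigma>" by blast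
  moreover obtain C where "vertex_set C" "\<sigma> = convex hull C" using K_simplex \<open>\<sigma>\<in>K\<close> by blast
  ultimately show "c \<in> cells K" unfolding cells_def using cell_of_eq by auto
qed

lemma closure_ri: "\<sigma> \<in> K \<Longrightarrow> closure (rel_interior \<sigma>) = \<sigma>"
  using K_props convex_closure_rel_interior closure_closed by metis

lemma cell_closure: assumes "c \<in> cells K"
  shows "closure c \<in> K" "c \<subseteq> closure c" "c \<noteq> {}" "c = rel_interior (closure c)"
proof -
  obtain \<sigma> where s: "\<sigma>\<in>K" "c = rel_interior \<sigma>" using assms cells_iff by blast
  then show "closure c \<in> K" "c \<subseteq> closure c" "c = rel_interior (closure c)"
    using closure_ri closure_subset by auto
  show "c \<noteq> {}" using s K_props rel_interior_eq_empty by metis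
qed

lemma exists_face_cell:
  assumes "\<sigma> \<in> K" "y \<in> \<sigma>"
  shows "\<exists>\<tau>\<in>K. \<tau> \<subseteq> \<sigma> \<and> y \<in> rel_interior \<tau>"
proof -
  obtain C where C: "vertex_set C" "\<sigma> = convex hull C" using K_simplex assms by blast
  have fin: "finite C" and ind: "\<not> affine_dependent C" using C by (auto simp: vertex_set_def)
  obtain u where u: "\<forall>x\<in>C. 0 \<le> u x" "sum u C = 1" "(\<Sum>x\<in>C. u x *\<^sub>R x) = y"
    using assms C convex_hull_finite[OF fin] by auto
  define D where "D = {v\<in>C. 0 < u v}"
  have DC: "D \<subseteq> C" by (auto simp: D_def)
  have finD: "finite D" using fin DC finite_subset by blast
  have s1: "sum u D = 1"
  proof -
    have "sum u C = sum u D" unfolding D_def using fin u(1)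
      by (intro sum.mono_neutral_right) (auto simp: D_def order.order_iff_strict)
    then show ?thesis using u by simp
  qed
  have s2: "(\<Sum>x\<in>D. u x *\<^sub>R x) = y"
  proof -
    have "(\<Sum>x\<in>C. u x *\<^sub>R x) = (\<Sum>x\<in>D. u x *\<^sub>R x)" unfolding D_def using fin u(1)
      by (intro sum.mono_neutral_right) (auto simp: D_def order.order_iff_strict)
    then show ?thesis using u by simp
  qed
  have Dne: "D \<noteq> {}" using s1 by auto
  have indD: "\<not> affine_dependent D" using affine_independent_subset[OF ind DC] .
  have "y \<in> rel_interior (convex hull D)"
    unfolding rel_interior_convex_hull_explicit[OF indD] using s1 s2 by (auto simp: D_def)
  moreover have "is_face (convex hull D) \<sigma>" unfolding is_face_def using C DC Dne by blast
  then have "convex hull D \<in> K" using SC assms(1) by (auto simp: simplicial_complex_def)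
  moreover have "convex hull D \<subseteq> \<sigma>" using C DC hull_mono by blast
  ultimately show ?thesis by blast
qed

lemma ri_unique:
  assumes "\<tau>1 \<in> K" "\<tau>2 \<in> K" "y \<in> rel_interior \<tau>1" "y \<in> rel_interior \<tau>2"
  shows "\<tau>1 = \<tau>2"
proof -
  have y: "y \<in> \<tau>1 \<inter> \<tau>2" using assms rel_interior_subset by blast
  then have "is_face (\<tau>1 \<inter> \<tau>2) \<tau>1 \<and> is_face (\<tau>1 \<inter> \<tau>2) \<tau>2"
    using SC assms(1,2) unfolding simplicial_complex_def by blast
  then have f: "(\<tau>1 \<inter> \<tau>2) face_of \<tau>1" "(\<tau>1 \<inter> \<tau>2) face_of \<tau>2" using is_face_face_of by auto
  have "\<tau>1 \<inter> \<tau>2 = \<tau>1" using face_of_disjoint_rel_interior[OF f(1)] y assms(3) by blast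
  moreover have "\<tau>1 \<inter> \<tau>2 = \<tau>2" using face_of_disjoint_rel_interior[OF f(2)] y assms(4) by blast
  ultimately show ?thesis by simp
qed

lemma cell_unique: "c1 \<in> cells K \<Longrightarrow> c2 \<in> cells K \<Longrightarrow> y \<in> c1 \<Longrightarrow> y \<in> c2 \<Longrightarrow> c1 = c2"
  using cells_iff ri_unique by metis

lemma cell_exists: "y \<in> carrier_poly K \<Longrightarrow> \<exists>c\<in>cells K. y \<in> c"
  unfolding carrier_poly_def using exists_face_cell cells_iff by blast

lemma cellF: assumes "y \<in> carrier_poly K" shows "cellF K y \<in> cells K" "y \<in> cellF K y"
proof -
  have "\<exists>!c. c \<in> cells K \<and> y \<in> c" using cell_exists[OF assms] cell_unique by blast
  then have "cellF K y \<in> cells K \<and> y \<in> cellF K y" unfolding cellF_def by (rule theI')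
  then show "cellF K y \<in> cells K" "y \<in> cellF K y" by auto
qed

lemma cellF_eq: assumes "c \<in> cells K" "y \<in> c" shows "cellF K y = c"
proof -
  have "\<exists>!c'. c' \<in> cells K \<and> y \<in> c'" using assms cell_unique by blast
  then show ?thesis unfolding cellF_def by (rule the1_equality) (use assms in blast)
qed

lemma cells_sub: "c \<in> cells K \<Longrightarrow> c \<subseteq> carrier_poly K"
  using cell_closure unfolding carrier_poly_def by blast

lemma cellF_sub: assumes "\<sigma> \<in> K" "y \<in> \<sigma>" shows "cellF K y \<subseteq> \<sigma>"
proof -
  obtain \<tau> where "\<tau>\<in>K" "\<tau> \<subseteq> \<sigma>" "y \<in> rel_interior \<tau>" using exists_face_cell assms by blast
  then have "cellF K y = rel_interior \<tau>" using cellF_eq cells_iff by blast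
  then show ?thesis using \<open>\<tau> \<subseteq> \<sigma>\<close> rel_interior_subset by blast
qed

lemma cells_finite: "finite (cells K)"
proof -
  have "cells K \<subseteq> rel_interior ` K" using cells_iff by blast
  then show ?thesis using K_finite finite_subset by blast
qed

lemma seg_down: assumes "c \<in> cells K" "a \<in> c" "b \<in> closure c" "t \<in> {0..<1}"
  shows "linepath a b t \<in> c"
proof -
  have cc: "c = rel_interior (closure c)" "closure c \<in> K" using cell_closure assms(1) by auto
  have "b - (1 - t) *\<^sub>R (b - a) \<in> rel_interior (closure c)"
    apply (rule rel_interior_closure_convex_shrink)
    using K_props[OF cc(2)] assms cc by auto
  moreover have "linepath a b t = b - (1 - t) *\<^sub>R (b - a)"
    by (simp add: linepath_def algebra_simps)
  ultimately show ?thesis using cc by simp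
qed

lemma seg_up: assumes "c \<in> cells K" "a \<in> closure c" "b \<in> c" "t \<in> {0<..1}"
  shows "linepath a b t \<in> c"
proof -
  have "linepath a b t = linepath b a (1 - t)" by (simp add: linepath_def algebra_simps)
  then show ?thesis using seg_down[OF assms(1,3,2)] assms(4) by auto
qed


lemma cell_le_refl: "cell_le c c" by (simp add: cell_le_def closure_subset)

lemma cellF_carrier_le: "c \<in> cells K \<Longrightarrow> y \<in> c \<Longrightarrow> y \<in> carrier_poly K"
  using cells_sub by blast

lemma star_open:
  assumes "y \<in> carrier_poly K"
  shows "\<exists>e>0. \<forall>z\<in>carrier_poly K. dist z y < e \<longrightarrow> cell_le (cellF K y) (cellF K z)"
proof -
  define Z where "Z = \<Union>{\<sigma>\<in>K. \<not> cellF K y \<subseteq> \<sigma>}"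
  have "closed Z" unfolding Z_def using K_finite K_props(4) by (intro closed_Union) auto
  moreover have "y \<notin> Z" unfolding Z_def using cellF_sub by blast
  ultimately obtain e where e: "e > 0" "ball y e \<subseteq> - Z"
    using open_contains_ball[of "- Z"] by (auto simp: open_Compl)
  show ?thesis
  proof (intro exI[of _ e] conjI ballI impI)
    fix z assume z: "z \<in> carrier_poly K" "dist z y < e"
    have c: "cellF K z \<in> cells K" "z \<in> cellF K z" using cellF z(1) by auto
    have "closure (cellF K z) \<in> K" "z \<in> closure (cellF K z)" using cell_closure[OF c(1)] c(2) by auto
    moreover have "z \<notin> Z" using e z by (auto simp: dist_commute)
    ultimately show "cell_le (cellF K y) (cellF K z)" unfolding Z_def cell_le_def by blast
  qed (use e in auto)
qed

lemma local_cont: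
  assumes "topo_path K x \<pi>" "s \<in> {0..1}"
  shows "\<exists>d>0. \<forall>t\<in>{0..1}. dist t s < d \<longrightarrow> cell_le (cellF K (\<pi> s)) (cellF K (\<pi> t))"
proof -
  have ps: "\<pi> s \<in> carrier_poly K" using assms by (auto simp: topo_path_def)
  obtain e where e: "e > 0" "\<forall>z\<in>carrier_poly K. dist z (\<pi> s) < e \<longrightarrow> cell_le (cellF K (\<pi> s)) (cellF K z)"
    using star_open[OF ps] by blast
  have "continuous_on {0..1} \<pi>" using assms by (simp add: topo_path_def)
  then obtain d where d: "d > 0" "\<forall>t\<in>{0..1}. dist t s < d \<longrightarrow> dist (\<pi> t) (\<pi> s) < e"
    using e(1) assms(2) unfolding continuous_on_iff by blast
  show ?thesis
  proof (intro exI[of _ d] conjI ballI impI)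
    fix t assume "t \<in> {0..1}" "dist t s < d"
    moreover then have "\<pi> t \<in> carrier_poly K" using assms by (auto simp: topo_path_def)
    ultimately show "cell_le (cellF K (\<pi> s)) (cellF K (\<pi> t))" using d e by blast
  qed (use d in auto)
qed


definition chainto :: "'a set \<Rightarrow> (real \<Rightarrow> 'a) \<Rightarrow> real \<Rightarrow> bool" where
  "chainto c0 \<pi> s \<longleftrightarrow> (\<exists>m c. c 0 = c0 \<and> c m = cellF K (\<pi> s) \<and> (\<forall>i<m. cmp (c i) (c (Suc i)))
           \<and> (\<forall>i\<le>m. \<exists>r\<in>{0..<1}. c i = cellF K (\<pi> r)))"

lemma chainto_ext:
  assumes "chainto c0 \<pi> s1" "cmp (cellF K (\<pi> s1)) (cellF K (\<pi> s2))" "s2 \<in> {0..<1}"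
  shows "chainto c0 \<pi> s2"
proof -
  obtain m c where c: "c 0 = c0" "c m = cellF K (\<pi> s1)" "\<forall>i<m. cmp (c i) (c (Suc i))"
     "\<forall>i\<le>m. \<exists>r\<in>{0..<1}. c i = cellF K (\<pi> r)" using assms(1) unfolding chainto_def by blast
  define c' where "c' = c(Suc m := cellF K (\<pi> s2))"
  have "c' 0 = c0" "c' (Suc m) = cellF K (\<pi> s2)" using c by (auto simp: c'_def)
  moreover have "\<forall>i<Suc m. cmp (c' i) (c' (Suc i))"
    using c assms(2) by (auto simp: c'_def less_Suc_eq)
  moreover have "\<forall>i\<le>Suc m. \<exists>r\<in>{0..<1}. c' i = cellF K (\<pi> r)"
    using c assms(3) by (auto simp: c'_def le_Suc_eq)
  ultimately show ?thesis unfolding chainto_def by blast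
qed

lemma chain_exists:
  assumes tp: "topo_path K x \<pi>" and s: "s \<in> {0..<1}"
  shows "chainto (cellF K x) \<pi> s"
proof (rule connected_induction_simple[where S="{0..<1::real}" and a=0])
  show "connected {0..<1::real}" by simp
  show "(0::real) \<in> {0..<1}" "s \<in> {0..<1}" using s by auto
  show "chainto (cellF K x) \<pi> 0" unfolding chainto_def
    using tp by (intro exI[of _ 0] exI[of _ "\<lambda>_. cellF K x"]) (auto simp: topo_path_def intro!: bexI[of _ 0])
next
  fix a :: real assume a: "a \<in> {0..<1}"
  obtain d where d: "d > 0" "\<forall>t\<in>{0..1}. dist t a < d \<longrightarrow> cell_le (cellF K (\<pi> a)) (cellF K (\<pi> t))"
    using local_cont[OF tp, of a] a by force
  show "\<exists>T. openin (top_of_set {0..<1}) T \<and> a \<in> T \<and>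
          (\<forall>u\<in>T. \<forall>v\<in>T. chainto (cellF K x) \<pi> u \<longrightarrow> chainto (cellF K x) \<pi> v)"
  proof (intro exI[of _ "{0..<1} \<inter> ball a d"] conjI ballI impI)
    show "openin (top_of_set {0..<1}) ({0..<1} \<inter> ball a d)"
      by (intro openin_open_Int) auto
    show "a \<in> {0..<1} \<inter> ball a d" using a d by auto
    fix u v assume u: "u \<in> {0..<1} \<inter> ball a d" and v: "v \<in> {0..<1} \<inter> ball a d"
      and cu: "chainto (cellF K x) \<pi> u"
    have "cell_le (cellF K (\<pi> a)) (cellF K (\<pi> u))" "cell_le (cellF K (\<pi> a)) (cellF K (\<pi> v))"
      using d u v by (auto simp: dist_commute)
    then have "chainto (cellF K x) \<pi> a"
      using chainto_ext[OF cu, of a] a by (auto simp: cmp_def)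
    then show "chainto (cellF K x) \<pi> v"
      using chainto_ext[of _ _ a v] v \<open>cell_le (cellF K (\<pi> a)) (cellF K (\<pi> v))\<close> by (auto simp: cmp_def)
  qed
qed

lemma G2:
  assumes tp: "topo_path K x \<pi>"
  shows "\<exists>l \<rho>. pm_path (cells K) cell_le (cellF K x) l \<rho> \<and> \<rho> l = cellF K (\<pi> 1)
            \<and> (\<forall>j<l. \<exists>r\<in>{0..<1}. \<rho> j = cellF K (\<pi> r))"
proof -
  have car: "\<pi> t \<in> carrier_poly K" if "t \<in> {0..1}" for t using tp that by (auto simp: topo_path_def)
  have x0: "\<pi> 0 = x" using tp by (simp add: topo_path_def)
  obtain d where d: "d > 0" "\<forall>t\<in>{0..1}. dist t 1 < d \<longrightarrow> cell_le (cellF K (\<pi> 1)) (cellF K (\<pi> t))"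
    using local_cont[OF tp, of 1] by auto
  define r where "r = max 0 (1 - d/2)"
  have r: "r \<in> {0..<1}" "dist r 1 < d" using d(1) by (auto simp: r_def dist_real_def)
  then have le1: "cell_le (cellF K (\<pi> 1)) (cellF K (\<pi> r))" using d by auto
  obtain m c where c: "c 0 = cellF K x" "c m = cellF K (\<pi> r)" "\<forall>i<m. cmp (c i) (c (Suc i))"
     "\<forall>i\<le>m. \<exists>r\<in>{0..<1}. c i = cellF K (\<pi> r)" using chain_exists[OF tp r(1)] unfolding chainto_def by blast
  define \<rho> where "\<rho> = (\<lambda>i. if i = 0 then cellF K x else if i \<le> Suc m then c (i - 1) else cellF K (\<pi> 1))"
  have cellsr: "cellF K (\<pi> t) \<in> cells K" if "t \<in> {0..1}" for t using cellF car that by blast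
  have "pm_path (cells K) cell_le (cellF K x) (Suc (Suc m)) \<rho>"
    unfolding pm_path_def
  proof (intro conjI allI impI)
    show "2 \<le> Suc (Suc m)" by simp
    fix i assume "i \<le> Suc (Suc m)"
    show "\<rho> i \<in> cells K"
    proof (cases "i = 0 \<or> i > Suc m")
      case True then show ?thesis using cellsr[of 0] cellsr[of 1] x0 by (auto simp: \<rho>_def)
    next
      case False
      then have "i - 1 \<le> m" by auto
      then obtain r' where "r' \<in> {0..<1}" "c (i - 1) = cellF K (\<pi> r')" using c(4) by blast
      then show ?thesis using False cellsr[of r'] by (auto simp: \<rho>_def)
    qed
  next
    show "\<rho> 0 = cellF K x" by (simp add: \<rho>_def)
  next
    fix i assume i: "i < Suc (Suc m)"
    show "cell_le (\<rho> i) (\<rho> (Suc i)) \<or> cell_le (\<rho> (Suc i)) (\<rho> i)"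
    proof (cases "i = 0")
      case True then show ?thesis using c(1) by (simp add: \<rho>_def cell_le_refl)
    next
      case False
      then obtain k where k: "i = Suc k" by (cases i) auto
      show ?thesis
      proof (cases "k < m")
        case True then show ?thesis using c(3) k by (auto simp: \<rho>_def cmp_def)
      next
        case False then have "k = m" using i k by simp
        then show ?thesis using k le1 c(2) by (simp add: \<rho>_def)
      qed
    qed
  next
    show "cell_le (\<rho> 0) (\<rho> 1)" using c(1) by (simp add: \<rho>_def cell_le_refl)
    show "cell_le (\<rho> (Suc (Suc m))) (\<rho> (Suc (Suc m) - 1))" using le1 c(2) by (simp add: \<rho>_def)
  qed
  moreover have "\<rho> (Suc (Suc m)) = cellF K (\<pi> 1)" by (simp add: \<rho>_def)
  moreover have "\<forall>j<Suc (Suc m). \<exists>r\<in>{0..<1}. \<rho> j = cellF K (\<pi> r)"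
  proof (intro allI impI)
    fix j assume "j < Suc (Suc m)"
    then show "\<exists>r\<in>{0..<1}. \<rho> j = cellF K (\<pi> r)"
      using c(4) x0 by (cases j) (auto simp: \<rho>_def intro!: bexI[of _ 0])
  qed
  ultimately show ?thesis by blast
qed

lemma G3:
  assumes "1 \<le> n" "\<forall>i<n. cmp (\<rho> i) (\<rho> (Suc i))" "\<forall>i\<le>n. \<rho> i \<in> cells K"
    "cell_le (\<rho> n) (\<rho> (n - 1))" "a \<in> \<rho> 0" "b \<in> \<rho> n"
  shows "\<exists>g. path g \<and> g 0 = a \<and> g 1 = b \<and> (\<forall>t\<in>{0..<1}. \<exists>j<n. g t \<in> \<rho> j)"
  using assms
proof (induction n arbitrary: \<rho> a rule: nat_induct_at_least)
  case base
  have "b \<in> closure (\<rho> 0)" using base by (auto simp: cell_le_def)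
  then have "\<forall>t\<in>{0..<1}. linepath a b t \<in> \<rho> 0" using seg_down base by auto
  moreover have "linepath a b 0 = a" "linepath a b 1 = b" by (simp_all add: linepath_def)
  ultimately show ?case by (intro exI[of _ "linepath a b"]) auto
next
  case (Suc n)
  obtain p where p: "p \<in> \<rho> 1" using cell_closure(3) Suc.prems(2) by fastforce
  have g1: "\<forall>t\<in>{0..1}. linepath a p t \<in> \<rho> 0 \<or> linepath a p t \<in> \<rho> 1"
  proof
    fix t :: real assume t: "t \<in> {0..1}"
    have c: "cell_le (\<rho> 0) (\<rho> 1) \<or> cell_le (\<rho> 1) (\<rho> 0)" using Suc.prems(1) by (auto simp: cmp_def)
    show "linepath a p t \<in> \<rho> 0 \<or> linepath a p t \<in> \<rho> 1"
    proof (cases "cell_le (\<rho> 1) (\<rho> 0)")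
      case True
      then have "p \<in> closure (\<rho> 0)" using p by (auto simp: cell_le_def)
      then show ?thesis using seg_down[of "\<rho> 0" a p t] Suc.prems(2,4) t p
        by (cases "t = 1") (auto simp: linepath_def)
    next
      case False
      then have "a \<in> closure (\<rho> 1)" using c Suc.prems(4) by (auto simp: cell_le_def)
      then show ?thesis using seg_up[of "\<rho> 1" a p t] Suc.prems(2,4) t p
        by (cases "t = 0") (auto simp: linepath_def)
    qed
  qed
  have "\<exists>g. path g \<and> g 0 = p \<and> g 1 = b \<and> (\<forall>t\<in>{0..<1}. \<exists>j<n. g t \<in> \<rho> (Suc j))"
    apply (rule Suc.IH[of "\<lambda>i. \<rho> (Suc i)", simplified])
    using Suc.prems Suc.hyps p by (auto simp: Suc_diff_1)
  then obtain g2 where g2: "path g2" "g2 0 = p" "g2 1 = b" "\<forall>t\<in>{0..<1}. \<exists>j<n. g2 t \<in> \<rho> (Suc j)" by blast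
  define g where "g = linepath a p +++ g2"
  have "pathfinish (linepath a p) = pathstart g2" using g2 by (simp add: pathstart_def)
  then have "path g" unfolding g_def using g2 by simp
  moreover have "g 0 = a" "g 1 = b" using g2 by (auto simp: g_def joinpaths_def linepath_def)
  moreover have "\<forall>t\<in>{0..<1}. \<exists>j<Suc n. g t \<in> \<rho> j"
  proof
    fix t :: real assume t: "t \<in> {0..<1}"
    show "\<exists>j<Suc n. g t \<in> \<rho> j"
    proof (cases "t \<le> 1/2")
      case True
      then have "g t = linepath a p (2 * t)" by (simp add: g_def joinpaths_def)
      moreover have "2 * t \<in> {0..1}" using t True by auto
      ultimately show ?thesis using g1 Suc.hyps by force
    next
      case False
      then have "g t = g2 (2 * t - 1)" by (simp add: g_def joinpaths_def)
      moreover have "2 * t - 1 \<in> {0..<1}" using t False by auto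
      ultimately show ?thesis using g2(4) by fastforce
    qed
  qed
  ultimately show ?case by blast
qed

end



context fixes K :: "'a::euclidean_space set set" and V :: "'p \<Rightarrow> 'a set"
  assumes PM: "polyhedral_model K V"
begin

lemma SC': "simplicial_complex K" using PM by (simp add: polyhedral_model_def)

lemma atom_transfer:
  assumes "x \<in> carrier_poly K"
  shows "x \<in> V p \<longleftrightarrow> cellF K x \<in> cell_val K V p"
proof
  assume "x \<in> V p"
  obtain S where S: "S \<subseteq> cells K" "V p = \<Union>S" using PM unfolding polyhedral_model_def by blast
  then obtain c where "c \<in> S" "x \<in> c" using \<open>x \<in> V p\<close> by blast
  then have "cellF K x = c" using cellF_eq[OF SC'] S by blast
  then show "cellF K x \<in> cell_val K V p" using S \<open>c \<in> S\<close> by (auto simp: cell_val_def)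
next
  assume "cellF K x \<in> cell_val K V p"
  then show "x \<in> V p" using cellF[OF SC' assms] by (auto simp: cell_val_def)
qed

lemma transfer:
  "\<forall>x\<in>carrier_poly K. sat_poly K V x \<phi> \<longleftrightarrow> sat_pos (cells K) cell_le (cell_val K V) (cellF K x) \<phi>"
proof (induction \<phi>)
  case (Atom p) then show ?case using atom_transfer by simp
next
  case (Neg \<phi>) then show ?case by simp
next
  case (Conj \<phi>1 \<phi>2) then show ?case by simp
next
  case (Eta \<phi> \<psi>)
  show ?case
  proof (intro ballI iffI)
    fix x assume x: "x \<in> carrier_poly K" and "sat_poly K V x (Eta \<phi> \<psi>)"
    then obtain \<pi> where \<pi>: "topo_path K x \<pi>" "sat_poly K V (\<pi> 1) \<psi>" "\<forall>r\<in>{0..<1}. sat_poly K V (\<pi> r) \<phi>"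
      by auto
    have car: "\<pi> t \<in> carrier_poly K" if "t \<in> {0..1}" for t using \<pi>(1) that by (auto simp: topo_path_def)
    obtain l \<rho> where \<rho>: "pm_path (cells K) cell_le (cellF K x) l \<rho>" "\<rho> l = cellF K (\<pi> 1)"
      "\<forall>j<l. \<exists>r\<in>{0..<1}. \<rho> j = cellF K (\<pi> r)" using G2[OF SC' \<pi>(1)] by blast
    have "sat_pos (cells K) cell_le (cell_val K V) (\<rho> l) \<psi>" using \<rho>(2) Eta.IH(2) car[of 1] \<pi>(2) by auto
    moreover have "\<forall>j<l. sat_pos (cells K) cell_le (cell_val K V) (\<rho> j) \<phi>"
    proof (intro allI impI)
      fix j assume "j < l"
      then obtain r where "r \<in> {0..<1}" "\<rho> j = cellF K (\<pi> r)" using \<rho>(3) by blast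
      then show "sat_pos (cells K) cell_le (cell_val K V) (\<rho> j) \<phi>"
        using Eta.IH(1) car[of r] \<pi>(3) by auto
    qed
    ultimately show "sat_pos (cells K) cell_le (cell_val K V) (cellF K x) (Eta \<phi> \<psi>)"
      using \<rho>(1) by auto
  next
    fix x assume x: "x \<in> carrier_poly K" and "sat_pos (cells K) cell_le (cell_val K V) (cellF K x) (Eta \<phi> \<psi>)"
    then obtain l \<rho> where \<rho>: "pm_path (cells K) cell_le (cellF K x) l \<rho>"
      "sat_pos (cells K) cell_le (cell_val K V) (\<rho> l) \<psi>"
      "\<forall>i<l. sat_pos (cells K) cell_le (cell_val K V) (\<rho> i) \<phi>" by auto
    have pm: "2 \<le> l" "\<forall>i\<le>l. \<rho> i \<in> cells K" "\<rho> 0 = cellF K x"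
      "\<forall>i<l. cmp (\<rho> i) (\<rho> (Suc i))" "cell_le (\<rho> l) (\<rho> (l - 1))"
      using \<rho>(1) by (auto simp: pm_path_def cmp_def)
    obtain b where b: "b \<in> \<rho> l" using cell_closure(3)[OF SC'] pm(2) by fastforce
    have a: "x \<in> \<rho> 0" using pm(3) cellF[OF SC' x] by simp
    obtain g where g: "path g" "g 0 = x" "g 1 = b" "\<forall>t\<in>{0..<1}. \<exists>j<l. g t \<in> \<rho> j"
      using G3[OF SC', of l \<rho> x b] pm a b by auto
    have bc: "b \<in> carrier_poly K" using cells_sub[OF SC'] pm(2) b by blast
    have gc: "g t \<in> carrier_poly K" if "t \<in> {0..1}" for t
    proof (cases "t = 1")
      case True then show ?thesis using g bc by simp
    next
      case False then have "t \<in> {0..<1}" using that by auto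
      then obtain j where "j < l" "g t \<in> \<rho> j" using g by blast
      then have "\<rho> j \<in> cells K" using pm(2) by simp
      then show ?thesis using cells_sub[OF SC'] \<open>g t \<in> \<rho> j\<close> by blast
    qed
    have tp: "topo_path K x g" using g gc by (auto simp: topo_path_def path_def)
    have "cellF K b = \<rho> l" using cellF_eq[OF SC'] pm(2) b by blast
    then have "sat_poly K V (g 1) \<psi>" using Eta.IH(2) bc \<rho>(2) g(3) by auto
    moreover have "\<forall>r\<in>{0..<1}. sat_poly K V (g r) \<phi>"
    proof
      fix r :: real assume r: "r \<in> {0..<1}"
      then obtain j where j: "j < l" "g r \<in> \<rho> j" using g by blast
      then have "cellF K (g r) = \<rho> j" using cellF_eq[OF SC'] pm(2) by auto
      then show "sat_poly K V (g r) \<phi>" using Eta.IH(1) gc[of r] r \<rho>(3) j by auto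
    qed
    ultimately show "sat_poly K V x (Eta \<phi> \<psi>)" using tp by auto
  qed
qed

end




definition TT :: "'p form" where "TT = Neg (Conj (Atom undefined) (Neg (Atom undefined)))"
definition Or :: "'p form \<Rightarrow> 'p form \<Rightarrow> 'p form" where "Or a b = Neg (Conj (Neg a) (Neg b))"
definition BigConj :: "'p form list \<Rightarrow> 'p form" where "BigConj xs = foldr Conj xs TT"
definition BigOr :: "'p form list \<Rightarrow> 'p form" where "BigOr xs = foldr Or xs (Neg TT)"

definition Eqv :: "('x \<Rightarrow> 'p form \<Rightarrow> bool) \<Rightarrow> 'x \<Rightarrow> 'x \<Rightarrow> bool" where
  "Eqv sat y c \<longleftrightarrow> (\<forall>\<phi>. sat y \<phi> = sat c \<phi>)"

context
  fixes sat :: "'x \<Rightarrow> 'p form \<Rightarrow> bool"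
  assumes sN: "\<And>x \<phi>. sat x (Neg \<phi>) = (\<not> sat x \<phi>)"
    and sC: "\<And>x \<phi> \<psi>. sat x (Conj \<phi> \<psi>) = (sat x \<phi> \<and> sat x \<psi>)"
begin

lemma sat_TT: "sat x TT" by (simp add: TT_def sN sC)

lemma sat_BigConj: "sat x (BigConj xs) \<longleftrightarrow> (\<forall>\<phi>\<in>set xs. sat x \<phi>)"
  by (induction xs) (auto simp: BigConj_def sat_TT sC)

lemma sat_Or: "sat x (Or a b) \<longleftrightarrow> sat x a \<or> sat x b"
  unfolding Or_def sN sC by simp

lemma sat_BigOr: "sat x (BigOr xs) \<longleftrightarrow> (\<exists>\<phi>\<in>set xs. sat x \<phi>)"
proof (induction xs)
  case Nil then show ?case by (simp add: BigOr_def sN sat_TT)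
next
  case (Cons a xs) then show ?case by (simp add: BigOr_def sat_Or)
qed

lemma char1:
  assumes fin: "finite (f ` X)" and inv: "\<forall>y\<in>X. \<forall>z\<in>X. f y = f z \<longrightarrow> Eqv sat y z" and c: "c \<in> X"
  shows "\<exists>chi. \<forall>y\<in>X. sat y chi \<longleftrightarrow> Eqv sat y c"
proof -
  define Y where "Y = f ` {y\<in>X. \<not> Eqv sat y c}"
  have "Y \<subseteq> f ` X" unfolding Y_def by auto
  then have fY: "finite Y" using fin by (rule finite_subset)
  define xs where "xs = (SOME xs. set xs = Y)"
  have xs: "set xs = Y" unfolding xs_def by (rule someI_ex[OF finite_list[OF fY]])
  define rep where "rep w = (SOME y. y \<in> X \<and> f y = w \<and> \<not> Eqv sat y c)" for w
  define dis where "dis y = (SOME \<phi>. sat c \<phi> \<and> \<not> sat y \<phi>)" for y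
  have rep: "rep w \<in> X \<and> f (rep w) = w \<and> \<not> Eqv sat (rep w) c" if wY: "w \<in> Y" for w
  proof -
    obtain y where y: "y \<in> X" "f y = w" "\<not> Eqv sat y c" using wY unfolding Y_def by blast
    show ?thesis unfolding rep_def
      by (rule someI[of "\<lambda>y. y \<in> X \<and> f y = w \<and> \<not> Eqv sat y c" y]) (use y in blast)
  qed
  have dis: "sat c (dis y) \<and> \<not> sat y (dis y)" if nE: "\<not> Eqv sat y c" for y
  proof -
    obtain \<phi> where "sat y \<phi> \<noteq> sat c \<phi>" using nE unfolding Eqv_def by blast
    then have "\<exists>\<phi>. sat c \<phi> \<and> \<not> sat y \<phi>"
    proof (cases "sat c \<phi>")
      case True then show ?thesis using \<open>sat y \<phi> \<noteq> sat c \<phi>\<close> by blast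
    next
      case False then show ?thesis using \<open>sat y \<phi> \<noteq> sat c \<phi>\<close> sN[of c \<phi>] sN[of y \<phi>] by blast
    qed
    then show ?thesis unfolding dis_def by (rule someI_ex)
  qed
  define chi where "chi = BigConj (map (\<lambda>w. dis (rep w)) xs)"
  have "sat c chi" unfolding chi_def sat_BigConj using xs rep dis by auto
  show ?thesis
  proof (intro exI[of _ chi] ballI iffI)
    fix y assume y: "y \<in> X" "sat y chi"
    show "Eqv sat y c"
    proof (rule ccontr)
      assume ne: "\<not> Eqv sat y c"
      then have w: "f y \<in> Y" using y Y_def by auto
      then have "rep (f y) \<in> X" "f (rep (f y)) = f y" using rep by auto
      then have "Eqv sat y (rep (f y))" using inv y(1) by auto
      moreover have "\<not> sat (rep (f y)) (dis (rep (f y)))" using rep[OF w] dis by blast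
      moreover have "sat y (dis (rep (f y)))" using y(2) w xs unfolding chi_def sat_BigConj by auto
      ultimately show False by (auto simp: Eqv_def)
    qed
  next
    fix y assume "y \<in> X" "Eqv sat y c"
    then show "sat y chi" using \<open>sat c chi\<close> by (auto simp: Eqv_def)
  qed
qed

lemma charA:
  assumes fin: "finite (f ` X)" and inv: "\<forall>y\<in>X. \<forall>z\<in>X. f y = f z \<longrightarrow> Eqv sat y z" and A: "A \<subseteq> X"
  shows "\<exists>chi. \<forall>y\<in>X. sat y chi \<longleftrightarrow> (\<exists>a\<in>A. Eqv sat y a)"
proof -
  have "finite (f ` A)" using finite_subset[OF image_mono[OF A] fin] .
  then have fA: "finite (f ` A)" .
  define xs where "xs = (SOME xs. set xs = f ` A)"
  have xs: "set xs = f ` A" unfolding xs_def by (rule someI_ex[OF finite_list[OF fA]])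
  define rep where "rep w = (SOME a. a \<in> A \<and> f a = w)" for w
  have rep: "rep w \<in> A \<and> f (rep w) = w" if wA: "w \<in> f ` A" for w
  proof -
    obtain y where y: "y \<in> A" "f y = w" using wA by blast
    show ?thesis unfolding rep_def
      by (rule someI[of "\<lambda>y. y \<in> A \<and> f y = w" y]) (use y in blast)
  qed
  define ch where "ch a = (SOME chi. \<forall>y\<in>X. sat y chi \<longleftrightarrow> Eqv sat y a)" for a
  have ch: "\<forall>y\<in>X. sat y (ch a) \<longleftrightarrow> Eqv sat y a" if "a \<in> X" for a
    unfolding ch_def using char1[OF fin inv that] by (rule someI_ex)
  define chi where "chi = BigOr (map (\<lambda>w. ch (rep w)) xs)"
  show ?thesis
  proof (intro exI[of _ chi] ballI iffI)
    fix y assume y: "y \<in> X" "sat y chi"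
    then obtain w where w: "w \<in> f ` A" "sat y (ch (rep w))" unfolding chi_def sat_BigOr using xs by auto
    then show "\<exists>a\<in>A. Eqv sat y a" using rep[OF w(1)] ch A y by blast
  next
    fix y assume y: "y \<in> X" and "\<exists>a\<in>A. Eqv sat y a"
    then obtain a where a: "a \<in> A" "Eqv sat y a" by blast
    have r: "rep (f a) \<in> A" "f (rep (f a)) = f a" using rep a by auto
    moreover have "a \<in> X" "rep (f a) \<in> X" using A a r by auto
    ultimately have "Eqv sat a (rep (f a))" using inv by metis
    then have "Eqv sat y (rep (f a))" using a by (auto simp: Eqv_def)
    then have "sat y (ch (rep (f a)))" using ch r A y by blast
    then show "sat y chi" unfolding chi_def sat_BigOr using xs a by auto
  qed
qed

end




context
  fixes W :: "'w set" and le :: "'w \<Rightarrow> 'w \<Rightarrow> bool" and Val :: "'p \<Rightarrow> 'w set"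
  assumes finW: "finite W" and refl: "\<And>w. w \<in> W \<Longrightarrow> le w w"
begin

abbreviation "satW \<equiv> sat_pos W le Val"

lemma Eqv_pos: "Eqv satW a b \<longleftrightarrow> eq_eta_pos W le Val a b"
  by (simp add: Eqv_def eq_eta_pos_def)

lemma c_to_d:
  assumes "w1 \<in> W" "w2 \<in> W" "eq_eta_pos W le Val w1 w2"
  shows "approx_pm W le Val w1 w2"
proof -
  define B where "B = {(a, b). a \<in> W \<and> b \<in> W \<and> eq_eta_pos W le Val a b}"
  have fin: "finite (id ` W)" using finW by simp
  have inv: "\<forall>y\<in>W. \<forall>z\<in>W. id y = id z \<longrightarrow> Eqv satW y z" by (simp add: Eqv_def)
  have sN: "\<And>x \<phi>. satW x (Neg \<phi>) = (\<not> satW x \<phi>)" and sC: "\<And>x \<phi> \<psi>. satW x (Conj \<phi> \<psi>) = (satW x \<phi> \<and> satW x \<psi>)"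
    by auto
  have "weak_pm_bisim W le Val B"
    unfolding weak_pm_bisim_def
  proof (intro conjI allI impI ballI)
    show "B \<subseteq> W \<times> W" by (auto simp: B_def)
    show "sym B" by (auto simp: B_def sym_def eq_eta_pos_def)
  next
    fix a b p assume "(a, b) \<in> B"
    then have "sat_pos W le Val a (Atom p) = sat_pos W le Val b (Atom p)" unfolding B_def eq_eta_pos_def by blast
    then show "a \<in> Val p \<longleftrightarrow> b \<in> Val p" by simp
  next
    fix a b u1 d1 assume ab: "(a, b) \<in> B" and u1: "u1 \<in> W" and d1: "d1 \<in> W"
      and cond: "(le a u1 \<or> le u1 a) \<and> le d1 u1"
    have aW: "a \<in> W" and bW: "b \<in> W" and eab: "eq_eta_pos W le Val a b" using ab by (auto simp: B_def)
    obtain chA where chA: "\<forall>y\<in>W. satW y chA \<longleftrightarrow> (\<exists>c\<in>{a, u1}. Eqv satW y c)"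
      using charA[of satW id W "{a, u1}", OF sN sC fin inv] aW u1 by auto
    obtain chD where chD: "\<forall>y\<in>W. satW y chD \<longleftrightarrow> Eqv satW y d1"
      using char1[of satW id W d1, OF sN sC fin inv d1] by auto
    have "satW a (Eta chA chD)"
    proof (cases "le a u1")
      case True
      define \<rho> where "\<rho> = (\<lambda>i::nat. if i = 0 then a else if i = 1 then u1 else d1)"
      have "pm_path W le a 2 \<rho>" unfolding pm_path_def using True cond aW u1 d1
        by (auto simp: \<rho>_def less_Suc_eq numeral_2_eq_2 le_Suc_eq)
      moreover have "satW (\<rho> 2) chD" using chD d1 by (simp add: \<rho>_def Eqv_def)
      moreover have "\<forall>i<2. satW (\<rho> i) chA" using chA aW u1
        by (auto simp: \<rho>_def Eqv_def less_Suc_eq numeral_2_eq_2)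
      ultimately show ?thesis by auto
    next
      case False
      then have ua: "le u1 a" using cond by simp
      define \<rho> where "\<rho> = (\<lambda>i::nat. if i \<le> 1 then a else if i = 2 then u1 else d1)"
      have "pm_path W le a 3 \<rho>" unfolding pm_path_def using ua cond aW u1 d1 refl[OF aW]
        by (auto simp: \<rho>_def less_Suc_eq numeral_3_eq_3 numeral_2_eq_2 le_Suc_eq)
      moreover have "satW (\<rho> 3) chD" using chD d1 by (simp add: \<rho>_def Eqv_def)
      moreover have "\<forall>i<3. satW (\<rho> i) chA" using chA aW u1
        by (auto simp: \<rho>_def Eqv_def less_Suc_eq numeral_3_eq_3 numeral_2_eq_2)
      ultimately show ?thesis by auto
    qed
    then have "satW b (Eta chA chD)" using eab unfolding eq_eta_pos_def by blast
    then obtain l2 \<pi>2 where p: "pm_path W le b l2 \<pi>2" "satW (\<pi>2 l2) chD" "\<forall>i<l2. satW (\<pi>2 i) chA"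
      by auto
    have inW: "\<forall>i\<le>l2. \<pi>2 i \<in> W" using p(1) by (simp add: pm_path_def)
    have "(d1, \<pi>2 l2) \<in> B" using p(2) chD inW d1 by (auto simp: B_def Eqv_pos eq_eta_pos_def)
    moreover have "\<forall>j<l2. (a, \<pi>2 j) \<in> B \<or> (u1, \<pi>2 j) \<in> B"
    proof (intro allI impI)
      fix j assume j: "j < l2"
      then have "\<pi>2 j \<in> W" using inW by simp
      then have "Eqv satW (\<pi>2 j) a \<or> Eqv satW (\<pi>2 j) u1" using chA p(3) j by auto
      then show "(a, \<pi>2 j) \<in> B \<or> (u1, \<pi>2 j) \<in> B" using \<open>\<pi>2 j \<in> W\<close> aW u1
        by (auto simp: B_def Eqv_def eq_eta_pos_def)
    qed
    ultimately show "\<exists>l2 \<pi>2. pm_path W le b l2 \<pi>2 \<and> (d1, \<pi>2 l2) \<in> B \<and>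
                    (\<forall>j<l2. (a, \<pi>2 j) \<in> B \<or> (u1, \<pi>2 j) \<in> B)" using p(1) by blast
  qed
  moreover have "(w1, w2) \<in> B" using assms by (simp add: B_def)
  ultimately show ?thesis unfolding approx_pm_def by blast
qed


definition "chn \<sigma> m \<longleftrightarrow> (\<forall>i\<le>m. \<sigma> i \<in> W) \<and> (\<forall>i<m. le (\<sigma> i) (\<sigma> (Suc i)) \<or> le (\<sigma> (Suc i)) (\<sigma> i))"

definition "conc \<sigma> m \<tau> = (\<lambda>i::nat. if i \<le> m then \<sigma> i else \<tau> (i - m))"

lemma conc_chn:
  assumes "chn \<sigma> m" "pm_path W le (\<sigma> m) l2 \<tau>"
  shows "chn (conc \<sigma> m \<tau>) (m + l2)"
  unfolding chn_def
proof (intro conjI allI impI)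
  have t: "\<forall>i\<le>l2. \<tau> i \<in> W" "\<tau> 0 = \<sigma> m" "\<forall>i<l2. le (\<tau> i) (\<tau> (Suc i)) \<or> le (\<tau> (Suc i)) (\<tau> i)"
    using assms(2) by (auto simp: pm_path_def)
  fix i
  show "i \<le> m + l2 \<Longrightarrow> conc \<sigma> m \<tau> i \<in> W" using assms(1) t(1) by (auto simp: chn_def conc_def)
  assume i: "i < m + l2"
  show "le (conc \<sigma> m \<tau> i) (conc \<sigma> m \<tau> (Suc i)) \<or> le (conc \<sigma> m \<tau> (Suc i)) (conc \<sigma> m \<tau> i)"
  proof (cases "i < m")
    case True then show ?thesis using assms(1) by (auto simp: chn_def conc_def)
  next
    case False
    then have "conc \<sigma> m \<tau> i = \<tau> (i - m)" "conc \<sigma> m \<tau> (Suc i) = \<tau> (Suc (i - m))"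
      using t(2) by (auto simp: conc_def Suc_diff_le)
    moreover have "i - m < l2" using i False by auto
    ultimately show ?thesis using t(3) by auto
  qed
qed

lemma eta_step:
  assumes B: "weak_pm_bisim W le Val B"
    and IH1: "\<forall>v1 v2. (v1, v2) \<in> B \<longrightarrow> (satW v1 \<phi> \<longleftrightarrow> satW v2 \<phi>)"
    and IH2: "\<forall>v1 v2. (v1, v2) \<in> B \<longrightarrow> (satW v1 \<psi> \<longleftrightarrow> satW v2 \<psi>)"
    and w: "(w1, w2) \<in> B" and p1: "pm_path W le w1 l \<pi>1"
    and s1: "satW (\<pi>1 l) \<psi>" "\<forall>i<l. satW (\<pi>1 i) \<phi>"
  shows "\<exists>l' \<rho>. pm_path W le w2 l' \<rho> \<and> satW (\<rho> l') \<psi> \<and> (\<forall>i<l'. satW (\<rho> i) \<phi>)"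
proof -
  have BW: "B \<subseteq> W \<times> W" using B by (simp add: weak_pm_bisim_def)
  have Bphi: "satW b \<phi>" if "(a, b) \<in> B" "satW a \<phi>" for a b using IH1 that by blast
  have Bpsi: "satW b \<psi>" if "(a, b) \<in> B" "satW a \<psi>" for a b using IH2 that by blast
  have Bstep: "\<exists>l2 \<pi>2. pm_path W le w2' l2 \<pi>2 \<and> (d1, \<pi>2 l2) \<in> B \<and> (\<forall>j<l2. (w1', \<pi>2 j) \<in> B \<or> (u1, \<pi>2 j) \<in> B)"
    if "(w1', w2') \<in> B" "u1 \<in> W" "d1 \<in> W" "le w1' u1 \<or> le u1 w1'" "le d1 u1" for w1' w2' u1 d1
    using B that unfolding weak_pm_bisim_def by blast
  have pp: "2 \<le> l" "\<forall>i\<le>l. \<pi>1 i \<in> W" "\<pi>1 0 = w1" "\<forall>i<l. le (\<pi>1 i) (\<pi>1 (Suc i)) \<or> le (\<pi>1 (Suc i)) (\<pi>1 i)"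
    "le (\<pi>1 l) (\<pi>1 (l - 1))" using p1 by (auto simp: pm_path_def)
  have claim: "k \<le> l - 2 \<Longrightarrow> \<exists>m \<sigma>. chn \<sigma> m \<and> \<sigma> 0 = w2 \<and> (\<pi>1 k, \<sigma> m) \<in> B \<and> (\<forall>i\<le>m. satW (\<sigma> i) \<phi>)" for k
  proof (induction k)
    case 0
    have "w2 \<in> W" using w BW by auto
    moreover have "satW w2 \<phi>" using IH1 w s1(2) pp(1,3) by force
    ultimately show ?case using w pp(3)
      by (intro exI[of _ 0] exI[of _ "\<lambda>_. w2"]) (auto simp: chn_def)
  next
    case (Suc k)
    then obtain m \<sigma> where \<sigma>: "chn \<sigma> m" "\<sigma> 0 = w2" "(\<pi>1 k, \<sigma> m) \<in> B" "\<forall>i\<le>m. satW (\<sigma> i) \<phi>" by auto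
    have k: "Suc k < l" using Suc.prems pp(1) by auto
    obtain l2 \<tau> where \<tau>: "pm_path W le (\<sigma> m) l2 \<tau>" "(\<pi>1 (Suc k), \<tau> l2) \<in> B"
      "\<forall>j<l2. (\<pi>1 k, \<tau> j) \<in> B \<or> (\<pi>1 (Suc k), \<tau> j) \<in> B"
      using Bstep[OF \<sigma>(3), of "\<pi>1 (Suc k)" "\<pi>1 (Suc k)"] pp(2,4) k refl by auto
    have l2: "2 \<le> l2" using \<tau>(1) by (simp add: pm_path_def)
    have satk: "satW (\<pi>1 k) \<phi>" "satW (\<pi>1 (Suc k)) \<phi>" using s1(2) k by auto
    have "chn (conc \<sigma> m \<tau>) (m + l2)" using conc_chn[OF \<sigma>(1) \<tau>(1)] .
    moreover have "conc \<sigma> m \<tau> 0 = w2" using \<sigma>(2) by (simp add: conc_def)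
    moreover have "conc \<sigma> m \<tau> (m + l2) = \<tau> l2" using l2 by (simp add: conc_def)
    moreover have "\<forall>i\<le>m + l2. satW (conc \<sigma> m \<tau> i) \<phi>"
    proof (intro allI impI)
      fix i assume i: "i \<le> m + l2"
      show "satW (conc \<sigma> m \<tau> i) \<phi>"
      proof (cases "i \<le> m")
        case True then show ?thesis using \<sigma>(4) by (simp add: conc_def)
      next
        case False
        then have e: "conc \<sigma> m \<tau> i = \<tau> (i - m)" by (simp add: conc_def)
        show ?thesis
        proof (cases "i - m < l2")
          case True
          then have "(\<pi>1 k, \<tau> (i - m)) \<in> B \<or> (\<pi>1 (Suc k), \<tau> (i - m)) \<in> B" using \<tau>(3) by blast
          then have "satW (\<tau> (i - m)) \<phi>" using Bphi satk by blast
          then show ?thesis using e by simp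
        next
          case False then have "i - m = l2" using i by auto
          then have "satW (\<tau> (i - m)) \<phi>" using Bphi[OF \<tau>(2) satk(2)] by simp
          then show ?thesis using e by simp
        qed
      qed
    qed
    ultimately show ?case using \<tau>(2) by metis
  qed
  obtain m \<sigma> where \<sigma>: "chn \<sigma> m" "\<sigma> 0 = w2" "(\<pi>1 (l - 2), \<sigma> m) \<in> B" "\<forall>i\<le>m. satW (\<sigma> i) \<phi>"
    using claim[of "l - 2"] by auto
  have cmp1: "le (\<pi>1 (l-2)) (\<pi>1 (l-1)) \<or> le (\<pi>1 (l-1)) (\<pi>1 (l-2))"
    using pp(4)[rule_format, of "l-2"] pp(1) by (simp add: Suc_diff_Suc numeral_2_eq_2)
  obtain l2 \<tau> where \<tau>: "pm_path W le (\<sigma> m) l2 \<tau>" "(\<pi>1 l, \<tau> l2) \<in> B"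
      "\<forall>j<l2. (\<pi>1 (l-2), \<tau> j) \<in> B \<or> (\<pi>1 (l-1), \<tau> j) \<in> B"
    using Bstep[OF \<sigma>(3), of "\<pi>1 (l-1)" "\<pi>1 l"] pp(2,5) cmp1 by auto
  have l2: "2 \<le> l2" "le (\<tau> l2) (\<tau> (l2 - 1))" using \<tau>(1) by (auto simp: pm_path_def)
  have satk: "satW (\<pi>1 (l-2)) \<phi>" "satW (\<pi>1 (l-1)) \<phi>" using s1(2) pp(1) by auto
  define \<sigma>' where "\<sigma>' = conc \<sigma> m \<tau>"
  have ch: "chn \<sigma>' (m + l2)" unfolding \<sigma>'_def using conc_chn[OF \<sigma>(1) \<tau>(1)] .
  define \<rho> where "\<rho> = (\<lambda>i. if i = 0 then w2 else \<sigma>' (i - 1))"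
  have w2W: "w2 \<in> W" using w BW by auto
  have s'0: "\<sigma>' 0 = w2" using \<sigma>(2) by (simp add: \<sigma>'_def conc_def)
  have endL: "\<rho> (Suc (m + l2)) = \<tau> l2" using l2 by (simp add: \<rho>_def \<sigma>'_def conc_def)
  have endL1: "\<rho> (Suc (m + l2) - 1) = \<tau> (l2 - 1)"
  proof -
    have a1: "Suc (m + l2) - 1 = m + l2" by simp
    have a2: "\<not> (m + l2 - 1 \<le> m)" using l2(1) by simp
    have a3: "m + l2 - 1 - m = l2 - 1" by simp
    have a4: "l2 \<noteq> 0" using l2(1) by simp
    show ?thesis unfolding a1 \<rho>_def \<sigma>'_def conc_def using a2 a3 a4 by simp
  qed
  have "pm_path W le w2 (Suc (m + l2)) \<rho>"
    unfolding pm_path_def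
  proof (intro conjI allI impI)
    show "2 \<le> Suc (m + l2)" using l2 by simp
    fix i assume "i \<le> Suc (m + l2)"
    then show "\<rho> i \<in> W" using ch w2W by (auto simp: \<rho>_def chn_def)
  next
    show "\<rho> 0 = w2" by (simp add: \<rho>_def)
  next
    fix i assume i: "i < Suc (m + l2)"
    show "le (\<rho> i) (\<rho> (Suc i)) \<or> le (\<rho> (Suc i)) (\<rho> i)"
    proof (cases i)
      case 0 then show ?thesis using s'0 refl[OF w2W] by (simp add: \<rho>_def)
    next
      case (Suc j) then show ?thesis using ch i by (auto simp: \<rho>_def chn_def)
    qed
  next
    show "le (\<rho> 0) (\<rho> 1)" using s'0 refl[OF w2W] by (simp add: \<rho>_def)
    show "le (\<rho> (Suc (m + l2))) (\<rho> (Suc (m + l2) - 1))" using endL endL1 l2 by simp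
  qed
  moreover have "satW (\<rho> (Suc (m + l2))) \<psi>" using endL Bpsi[OF \<tau>(2) s1(1)] by simp
  moreover have "\<forall>i<Suc (m + l2). satW (\<rho> i) \<phi>"
  proof (intro allI impI)
    fix i assume i: "i < Suc (m + l2)"
    show "satW (\<rho> i) \<phi>"
    proof (cases "i = 0")
      case True
      have "satW (\<sigma> 0) \<phi>" using \<sigma>(4) by blast
      then show ?thesis using True \<sigma>(2) by (simp add: \<rho>_def)
    next
      case False
      then have e: "\<rho> i = \<sigma>' (i - 1)" by (simp add: \<rho>_def)
      show ?thesis
      proof (cases "i - 1 \<le> m")
        case True then show ?thesis using e \<sigma>(4) by (simp add: \<sigma>'_def conc_def)
      next
        case False
        then have ri: "\<rho> i = \<tau> (i - 1 - m)" "i - 1 - m < l2" using e i by (auto simp: \<sigma>'_def conc_def)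
        then have "(\<pi>1 (l-2), \<tau> (i - 1 - m)) \<in> B \<or> (\<pi>1 (l-1), \<tau> (i - 1 - m)) \<in> B" using \<tau>(3) by blast
        then have "satW (\<tau> (i - 1 - m)) \<phi>" using Bphi satk by blast
        then show ?thesis using ri by simp
      qed
    qed
  qed
  ultimately show ?thesis by blast
qed

lemma d_to_c:
  assumes "approx_pm W le Val w1 w2"
  shows "eq_eta_pos W le Val w1 w2"
proof -
  obtain B where B: "weak_pm_bisim W le Val B" "(w1, w2) \<in> B" using assms by (auto simp: approx_pm_def)
  have sB: "sym B" and atB: "\<forall>a b. (a, b) \<in> B \<longrightarrow> (\<forall>p. a \<in> Val p \<longleftrightarrow> b \<in> Val p)"
    using B(1) unfolding weak_pm_bisim_def by blast+
  have "\<forall>v1 v2. (v1, v2) \<in> B \<longrightarrow> (satW v1 \<phi> \<longleftrightarrow> satW v2 \<phi>)" for \<phi>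
  proof (induction \<phi>)
    case (Atom p) then show ?case using atB by simp
  next
    case (Neg \<phi>) then show ?case by simp
  next
    case (Conj \<phi>1 \<phi>2) then show ?case by simp
  next
    case (Eta \<phi> \<psi>)
    have one: "satW v2 (Eta \<phi> \<psi>)" if h: "(v1, v2) \<in> B" "satW v1 (Eta \<phi> \<psi>)" for v1 v2
    proof -
      obtain l \<pi>1 where "pm_path W le v1 l \<pi>1" "satW (\<pi>1 l) \<psi>" "\<forall>i<l. satW (\<pi>1 i) \<phi>"
        using h(2) by auto
      then show ?thesis using eta_step[OF B(1) Eta.IH h(1)] by auto
    qed
    show ?case
    proof (intro allI impI)
      fix v1 v2 assume "(v1, v2) \<in> B"
      moreover then have "(v2, v1) \<in> B" using sB by (auto simp: sym_def)
      ultimately show "satW v1 (Eta \<phi> \<psi>) \<longleftrightarrow> satW v2 (Eta \<phi> \<psi>)" using one by blast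
    qed
  qed
  then show ?thesis using B(2) by (simp add: eq_eta_pos_def)
qed

end




lemma a_to_b:
  assumes "approx_tri K V x1 x2"
  shows "eq_eta_poly K V x1 x2"
proof -
  obtain B where B: "weak_simp_bisim K V B" "(x1, x2) \<in> B" using assms by (auto simp: approx_tri_def)
  have sB: "sym B" using B(1) by (simp add: weak_simp_bisim_def)
  have bis: "\<And>a b. (a, b) \<in> B \<Longrightarrow> (\<forall>p. a \<in> V p \<longleftrightarrow> b \<in> V p) \<and>
        (\<forall>\<pi>1. topo_path K a \<pi>1 \<longrightarrow>
           (\<exists>\<pi>2. topo_path K b \<pi>2 \<and> (\<pi>1 1, \<pi>2 1) \<in> B \<and>
                 (\<forall>r2\<in>{0..<1}. \<exists>r1\<in>{0..<1}. (\<pi>1 r1, \<pi>2 r2) \<in> B)))"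
    using B(1) unfolding weak_simp_bisim_def by blast
  have "\<forall>v1 v2. (v1, v2) \<in> B \<longrightarrow> (sat_poly K V v1 \<phi> \<longleftrightarrow> sat_poly K V v2 \<phi>)" for \<phi>
  proof (induction \<phi>)
    case (Atom p) then show ?case using bis by simp
  next
    case (Neg \<phi>) then show ?case by simp
  next
    case (Conj \<phi>1 \<phi>2) then show ?case by simp
  next
    case (Eta \<phi> \<psi>)
    have one: "sat_poly K V v2 (Eta \<phi> \<psi>)" if h: "(v1, v2) \<in> B" "sat_poly K V v1 (Eta \<phi> \<psi>)" for v1 v2
    proof -
      obtain \<pi>1 where p1: "topo_path K v1 \<pi>1" "sat_poly K V (\<pi>1 1) \<psi>" "\<forall>r\<in>{0..<1}. sat_poly K V (\<pi>1 r) \<phi>"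
        using h(2) by auto
      obtain \<pi>2 where p2: "topo_path K v2 \<pi>2" "(\<pi>1 1, \<pi>2 1) \<in> B"
        "\<forall>r2\<in>{0..<1}. \<exists>r1\<in>{0..<1}. (\<pi>1 r1, \<pi>2 r2) \<in> B" using bis[OF h(1)] p1(1) by blast
      have "sat_poly K V (\<pi>2 1) \<psi>" using Eta.IH(2) p2(2) p1(2) by blast
      moreover have "\<forall>r\<in>{0..<1}. sat_poly K V (\<pi>2 r) \<phi>" using Eta.IH(1) p2(3) p1(3) by blast
      ultimately show ?thesis using p2(1) by auto
    qed
    show ?case
    proof (intro allI impI)
      fix v1 v2 assume "(v1, v2) \<in> B"
      moreover then have "(v2, v1) \<in> B" using sB by (auto simp: sym_def)
      ultimately show "sat_poly K V v1 (Eta \<phi> \<psi>) \<longleftrightarrow> sat_poly K V v2 (Eta \<phi> \<psi>)" using one by blast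
    qed
  qed
  then show ?thesis using B(2) by (simp add: eq_eta_poly_def)
qed

lemma b_to_a:
  assumes PM: "polyhedral_model K V" and x: "x1 \<in> carrier_poly K" "x2 \<in> carrier_poly K"
    and e: "eq_eta_poly K V x1 x2"
  shows "approx_tri K V x1 x2"
proof -
  have SC: "simplicial_complex K" using PM by (simp add: polyhedral_model_def)
  define C where "C = carrier_poly K"
  define B where "B = {(a, b). a \<in> C \<and> b \<in> C \<and> eq_eta_poly K V a b}"
  have sN: "\<And>x \<phi>. sat_poly K V x (Neg \<phi>) = (\<not> sat_poly K V x \<phi>)"
    and sC: "\<And>x \<phi> \<psi>. sat_poly K V x (Conj \<phi> \<psi>) = (sat_poly K V x \<phi> \<and> sat_poly K V x \<psi>)" by auto
  have fin: "finite (cellF K ` C)"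
    using finite_subset[OF _ cells_finite[OF SC], of "cellF K ` C"] cellF(1)[OF SC] by (auto simp: C_def)
  have inv: "\<forall>y\<in>C. \<forall>z\<in>C. cellF K y = cellF K z \<longrightarrow> Eqv (sat_poly K V) y z"
    using transfer[OF PM] by (auto simp: Eqv_def C_def)
  have EB: "Eqv (sat_poly K V) b a \<longleftrightarrow> eq_eta_poly K V a b" for a b
    by (auto simp: Eqv_def eq_eta_poly_def)
  have "weak_simp_bisim K V B"
    unfolding weak_simp_bisim_def
  proof (intro conjI allI impI)
    show "B \<subseteq> carrier_poly K \<times> carrier_poly K" by (auto simp: B_def C_def)
    show "sym B" by (auto simp: B_def sym_def eq_eta_poly_def)
  next
    fix a b p assume "(a, b) \<in> B"
    then have "sat_poly K V a (Atom p) = sat_poly K V b (Atom p)" unfolding B_def eq_eta_poly_def by blast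
    then show "a \<in> V p \<longleftrightarrow> b \<in> V p" by simp
  next
    fix a b \<pi>1 assume ab: "(a, b) \<in> B" and p1: "topo_path K a \<pi>1"
    have eab: "eq_eta_poly K V a b" using ab by (simp add: B_def)
    have car1: "\<pi>1 t \<in> C" if "t \<in> {0..1}" for t using p1 that by (auto simp: topo_path_def C_def)
    define A where "A = \<pi>1 ` {0..<1}"
    have AC: "A \<subseteq> C" using car1 by (auto simp: A_def)
    obtain chA where chA: "\<forall>y\<in>C. sat_poly K V y chA \<longleftrightarrow> (\<exists>c\<in>A. Eqv (sat_poly K V) y c)"
      using charA[of "sat_poly K V", OF sN sC fin inv AC] by blast
    obtain chD where chD: "\<forall>y\<in>C. sat_poly K V y chD \<longleftrightarrow> Eqv (sat_poly K V) y (\<pi>1 1)"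
      using char1[of "sat_poly K V", OF sN sC fin inv car1[of 1]] by auto
    have "sat_poly K V a (Eta chA chD)"
    proof -
      have "sat_poly K V (\<pi>1 1) chD" using chD car1[of 1] by (simp add: Eqv_def)
      moreover have "\<forall>r\<in>{0..<1}. sat_poly K V (\<pi>1 r) chA"
        using chA car1 by (auto simp: A_def Eqv_def)
      ultimately show ?thesis using p1 by auto
    qed
    then have "sat_poly K V b (Eta chA chD)" using eab unfolding eq_eta_poly_def by blast
    then obtain \<pi>2 where p2: "topo_path K b \<pi>2" "sat_poly K V (\<pi>2 1) chD" "\<forall>r\<in>{0..<1}. sat_poly K V (\<pi>2 r) chA"
      by auto
    have car2: "\<pi>2 t \<in> C" if "t \<in> {0..1}" for t using p2 that by (auto simp: topo_path_def C_def)
    have "(\<pi>1 1, \<pi>2 1) \<in> B" using chD p2(2) car2[of 1] car1[of 1] EB by (auto simp: B_def)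
    moreover have "\<forall>r2\<in>{0..<1}. \<exists>r1\<in>{0..<1}. (\<pi>1 r1, \<pi>2 r2) \<in> B"
    proof
      fix r2 :: real assume r2: "r2 \<in> {0..<1}"
      then have "\<pi>2 r2 \<in> C" using car2 by auto
      then obtain c where "c \<in> A" "Eqv (sat_poly K V) (\<pi>2 r2) c" using chA p2(3) r2 by blast
      then obtain r1 where "r1 \<in> {0..<1}" "Eqv (sat_poly K V) (\<pi>2 r2) (\<pi>1 r1)" by (auto simp: A_def)
      then show "\<exists>r1\<in>{0..<1}. (\<pi>1 r1, \<pi>2 r2) \<in> B"
        using \<open>\<pi>2 r2 \<in> C\<close> car1[of r1] EB by (auto simp: B_def)
    qed
    ultimately show "\<exists>\<pi>2. topo_path K b \<pi>2 \<and> (\<pi>1 1, \<pi>2 1) \<in> B \<and>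
                 (\<forall>r2\<in>{0..<1}. \<exists>r1\<in>{0..<1}. (\<pi>1 r1, \<pi>2 r2) \<in> B)" using p2(1) by blast
  qed
  moreover have "(x1, x2) \<in> B" using x e by (simp add: B_def C_def)
  ultimately show ?thesis by (auto simp: approx_tri_def)
qed

theorem corollary1:
  fixes K :: "'a::euclidean_space set set" and V :: "'p \<Rightarrow> 'a set"
  assumes "polyhedral_model K V"
    and "x1 \<in> carrier_poly K" and "x2 \<in> carrier_poly K"
  shows "(approx_tri K V x1 x2 \<longleftrightarrow> eq_eta_poly K V x1 x2)
       \<and> (eq_eta_poly K V x1 x2 \<longleftrightarrow> eq_eta_pos (cells K) cell_le (cell_val K V) (cellF K x1) (cellF K x2))
       \<and> (eq_eta_pos (cells K) cell_le (cell_val K V) (cellF K x1) (cellF K x2)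
            \<longleftrightarrow> approx_pm (cells K) cell_le (cell_val K V) (cellF K x1) (cellF K x2))"
proof (intro conjI)
  have SC: "simplicial_complex K" using assms(1) by (simp add: polyhedral_model_def)
  show "approx_tri K V x1 x2 \<longleftrightarrow> eq_eta_poly K V x1 x2"
    using a_to_b b_to_a assms by blast
  show "eq_eta_poly K V x1 x2 \<longleftrightarrow> eq_eta_pos (cells K) cell_le (cell_val K V) (cellF K x1) (cellF K x2)"
    using transfer[OF assms(1)] assms(2,3) by (auto simp: eq_eta_poly_def eq_eta_pos_def)
  have finW: "finite (cells K)" using cells_finite[OF SC] .
  have reflC: "\<And>w. w \<in> cells K \<Longrightarrow> cell_le w w" using cell_le_refl[OF SC] by blast
  show "eq_eta_pos (cells K) cell_le (cell_val K V) (cellF K x1) (cellF K x2)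
            \<longleftrightarrow> approx_pm (cells K) cell_le (cell_val K V) (cellF K x1) (cellF K x2)"
    using c_to_d[where W="cells K" and le=cell_le and Val="cell_val K V", OF finW reflC]
      d_to_c[where W="cells K" and le=cell_le and Val="cell_val K V", OF finW reflC]
      cellF(1)[OF SC] assms(2,3) by blast
qed


end
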